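(* Let $\ket{\psi}$ be an $n$-qubit pure state and let $\mathbf{z}\in\{0,1\}^n$ satisfy $p_\psi(\mathbf{z})>0$. Let $P$ be any partition of $[n]$ such that $\ket{\psi}=\bigotimes_{\alpha\in P}\ket{\psi_\alpha}$ for pure states $\ket{\psi_\alpha}$ on the qubits in $\alpha$. Then for every block $\alpha\in P$, the Hamming weight of the substring $\mathbf{z}_\alpha=(z_i)_{i\in\alpha}$ is even. Equivalently, $\ket{\psi}$ cannot be a product with respect to any partition having a block on which the restriction of $\mathbf{z}$ has odd Hamming weight.
   Context: Parallelized controlled-SWAP test: for an $n$-qubit state $\ket{\psi}$, take two copies $\ket{\psi}^{\otimes 2}$ and let $\mathbb{F}^{(i)}$ denote the swap operator exchanging the $i$-th qubit of the first copy with the $i$-th qubit of the second copy. The probability of the outcome bitstring $\mathbf{z}\in\{0,1\}^n$ is $p_\psi(\mathbf{z})=\mathrm{Tr}\big[\big(\bigotimes_{i=1}^n\tfrac12(\mathbb{1}+(-1)^{z_i}\mathbb{F}^{(i)})\big)(\ket{\psi}\!\bra{\psi})^{\otimes 2}\big]$. *)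

theory Defs
  imports Complex_Main "HOL-Library.Disjoint_Sets"
begin

text \<open>Qubits are indexed by natural numbers; the n-qubit register uses qubits 0..n-1.
  A computational basis string on a set of qubits A is a function nat => bool that is
  False outside A. A (pure) state vector on A is a function from such strings to complex
  amplitudes.\<close>

definition bitstrs :: "nat set \<Rightarrow> (nat \<Rightarrow> bool) set" where
  "bitstrs A = {x. \<forall>i. x i \<longrightarrow> i \<in> A}"

definition restr :: "nat set \<Rightarrow> (nat \<Rightarrow> bool) \<Rightarrow> (nat \<Rightarrow> bool)" where
  "restr A x = (\<lambda>i. x i \<and> i \<in> A)"

definition is_pure_state :: "nat set \<Rightarrow> ((nat \<Rightarrow> bool) \<Rightarrow> complex) \<Rightarrow> bool" where
  "is_pure_state A \<phi> \<longleftrightarrow> (\<Sum>x\<in>bitstrs A. (cmod (\<phi> x))\<^sup>2) = 1"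

text \<open>Matrix element <x,y| Pi_z |x',y'> of the projector
  Pi_z = tensor_i (1/2)(1 + (-1)^{z_i} F^{(i)}) on two copies of n qubits,
  where F^{(i)} swaps qubit i of the first copy with qubit i of the second copy
  (single-site matrix element <a,b|F|a',b'> = [a = b'][b = a']).\<close>

definition swap_proj :: "nat \<Rightarrow> (nat \<Rightarrow> bool) \<Rightarrow> (nat \<Rightarrow> bool) \<times> (nat \<Rightarrow> bool)
    \<Rightarrow> (nat \<Rightarrow> bool) \<times> (nat \<Rightarrow> bool) \<Rightarrow> complex" where
  "swap_proj n z u v =
     (\<Prod>i<n. (1/2) * ((if fst u i = fst v i \<and> snd u i = snd v i then 1 else 0)
                      + (-1) ^ (if z i then 1 else 0) *
                        (if fst u i = snd v i \<and> snd u i = fst v i then 1 else 0)))"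

text \<open>p_psi(z) = Tr[Pi_z (|psi><psi|)^{(x)2}] = sum_{u,v} (Pi_z)_{u,v} (rho (x) rho)_{v,u}.
  The trace is real; we take its real part to obtain a real number.\<close>

definition swap_prob :: "nat \<Rightarrow> ((nat \<Rightarrow> bool) \<Rightarrow> complex) \<Rightarrow> (nat \<Rightarrow> bool) \<Rightarrow> real" where
  "swap_prob n \<psi> z = Re (\<Sum>u\<in>bitstrs {..<n} \<times> bitstrs {..<n}. \<Sum>v\<in>bitstrs {..<n} \<times> bitstrs {..<n}.
      swap_proj n z u v * (\<psi> (fst v) * \<psi> (snd v) * cnj (\<psi> (fst u) * \<psi> (snd u))))"

end

theory Submission
  imports Defs
begin

definition swapS :: "nat set \<Rightarrow> (nat \<Rightarrow> bool) \<times> (nat \<Rightarrow> bool) \<Rightarrow> (nat \<Rightarrow> bool) \<times> (nat \<Rightarrow> bool)" where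
  "swapS A v = ((\<lambda>i. if i \<in> A then snd v i else fst v i), (\<lambda>i. if i \<in> A then fst v i else snd v i))"

lemma swapS_invol: "swapS A (swapS A v) = v"
  by (auto simp: swapS_def)

lemma swapS_B: "v \<in> bitstrs N \<times> bitstrs N \<Longrightarrow> swapS A v \<in> bitstrs N \<times> bitstrs N"
  by (auto simp: swapS_def bitstrs_def)

lemma swapS_bij: "bij_betw (swapS A) (bitstrs N \<times> bitstrs N) (bitstrs N \<times> bitstrs N)"
  by (rule bij_betw_byWitness[where f' = "swapS A"]) (auto simp: swapS_invol swapS_def bitstrs_def)

lemma swap_proj_swapS:
  assumes "A \<subseteq> {..<n}"
  shows "swap_proj n z u (swapS A v) = (-1) ^ card {i\<in>A. z i} * swap_proj n z u v"
proof -
  define s where "s i = (if i \<in> A \<and> z i then (-1::complex) else 1)" for i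
  have f: "(1/2) * ((if fst u i = fst (swapS A v) i \<and> snd u i = snd (swapS A v) i then 1 else 0)
                      + (-1) ^ (if z i then 1 else 0) *
                        (if fst u i = snd (swapS A v) i \<and> snd u i = fst (swapS A v) i then 1 else 0))
        = s i * ((1/2) * ((if fst u i = fst v i \<and> snd u i = snd v i then 1 else 0)
                      + (-1) ^ (if z i then 1 else 0) *
                        (if fst u i = snd v i \<and> snd u i = fst v i then 1 else 0)))" for i
    by (cases "i \<in> A"; cases "z i") (auto simp: swapS_def s_def algebra_simps)
  have "swap_proj n z u (swapS A v) = (\<Prod>i<n. s i) * swap_proj n z u v"
    unfolding swap_proj_def f prod.distrib ..
  moreover have "(\<Prod>i<n. s i) = (-1) ^ card {i\<in>A. z i}"
  proof -
    have "(\<Prod>i<n. s i) = (\<Prod>i\<in>{i\<in>{..<n}. i \<in> A \<and> z i}. (-1::complex))"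
      unfolding s_def by (simp add: prod.If_cases Int_def)
    also have "{i\<in>{..<n}. i \<in> A \<and> z i} = {i\<in>A. z i}" using assms by auto
    finally show ?thesis by simp
  qed
  ultimately show ?thesis by simp
qed

theorem proposition3:
  fixes n :: nat
    and \<psi> :: "(nat \<Rightarrow> bool) \<Rightarrow> complex"
    and z :: "nat \<Rightarrow> bool"
    and P :: "nat set set"
    and \<phi> :: "nat set \<Rightarrow> (nat \<Rightarrow> bool) \<Rightarrow> complex"
  assumes "is_pure_state {..<n} \<psi>"
    and "z \<in> bitstrs {..<n}"
    and "swap_prob n \<psi> z > 0"
    and "partition_on {..<n} P"
    and "\<forall>\<alpha>\<in>P. is_pure_state \<alpha> (\<phi> \<alpha>)"
    and "\<forall>x\<in>bitstrs {..<n}. \<psi> x = (\<Prod>\<alpha>\<in>P. \<phi> \<alpha> (restr \<alpha> x))"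
  shows "\<forall>\<alpha>\<in>P. even (card {i\<in>\<alpha>. z i})"
proof (rule ccontr)
  assume "\<not> ?thesis"
  then obtain A where AP: "A \<in> P" and odd: "odd (card {i\<in>A. z i})" by auto
  have Asub: "A \<subseteq> {..<n}" using partition_onD1[OF assms(4)] AP by auto
  have disj: "\<And>B. B \<in> P \<Longrightarrow> B \<noteq> A \<Longrightarrow> B \<inter> A = {}"
    using partition_onD2[OF assms(4)] AP unfolding disjoint_def by blast
  define B where "B = bitstrs {..<n} \<times> bitstrs {..<n}"
  define Psi where "Psi v = \<psi> (fst v) * \<psi> (snd v)" for v
  have inv: "Psi (swapS A v) = Psi v" if "v \<in> B" for v
  proof -
    have v1: "fst v \<in> bitstrs {..<n}" "snd v \<in> bitstrs {..<n}" using that B_def by auto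
    have w: "fst (swapS A v) \<in> bitstrs {..<n}" "snd (swapS A v) \<in> bitstrs {..<n}"
      using swapS_B[of v "{..<n}" A] that B_def by auto
    have "Psi (swapS A v) = (\<Prod>\<beta>\<in>P. \<phi> \<beta> (restr \<beta> (fst (swapS A v))) * \<phi> \<beta> (restr \<beta> (snd (swapS A v))))"
      unfolding Psi_def prod.distrib using assms(6) w by simp
    also have "\<dots> = (\<Prod>\<beta>\<in>P. \<phi> \<beta> (restr \<beta> (fst v)) * \<phi> \<beta> (restr \<beta> (snd v)))"
    proof (rule prod.cong[OF refl])
      fix \<beta> assume b: "\<beta> \<in> P"
      show "\<phi> \<beta> (restr \<beta> (fst (swapS A v))) * \<phi> \<beta> (restr \<beta> (snd (swapS A v))) =
            \<phi> \<beta> (restr \<beta> (fst v)) * \<phi> \<beta> (restr \<beta> (snd v))"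
      proof (cases "\<beta> = A")
        case True
        have "restr \<beta> (fst (swapS A v)) = restr \<beta> (snd v)" "restr \<beta> (snd (swapS A v)) = restr \<beta> (fst v)"
          using True by (auto simp: restr_def swapS_def)
        then show ?thesis by simp
      next
        case False
        then have d: "\<beta> \<inter> A = {}" using disj b by blast
        have "restr \<beta> (fst (swapS A v)) = restr \<beta> (fst v)" "restr \<beta> (snd (swapS A v)) = restr \<beta> (snd v)"
          using d by (auto simp: restr_def swapS_def fun_eq_iff)
        then show ?thesis by simp
      qed
    qed
    also have "\<dots> = Psi v"
      unfolding Psi_def prod.distrib using assms(6) v1 by simp
    finally show ?thesis .
  qed
  have m1: "(-1::complex) ^ card {i\<in>A. z i} = -1" using odd by simp
  have inner0: "(\<Sum>v\<in>B. swap_proj n z u v * (Psi v * cnj (Psi u))) = 0" for u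
  proof -
    let ?g = "\<lambda>v. swap_proj n z u v * (Psi v * cnj (Psi u))"
    have "sum ?g B = sum (\<lambda>v. ?g (swapS A v)) B"
      using sum.reindex_bij_betw[OF swapS_bij[of A "{..<n}"], of ?g] B_def by simp
    also have "\<dots> = sum (\<lambda>v. - ?g v) B"
      by (rule sum.cong[OF refl]) (simp add: inv swap_proj_swapS[OF Asub] m1)
    also have "\<dots> = - sum ?g B" by (simp add: sum_negf)
    finally show ?thesis by simp
  qed
  have "swap_prob n \<psi> z = Re (\<Sum>u\<in>B. \<Sum>v\<in>B. swap_proj n z u v * (Psi v * cnj (Psi u)))"
    unfolding swap_prob_def B_def Psi_def by simp
  also have "\<dots> = 0" using inner0 by simp
  finally show False using assms(3) by simp
qed

end
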